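(* Let $\mathfrak{n}$ be the real $7$-dimensional Lie algebra with basis $e_1,\dots,e_7$ whose nonzero brackets (up to antisymmetry) are $[e_1,e_2]=e_3$, $[e_1,e_3]=e_4$, $[e_1,e_4]=e_6$, $[e_1,e_6]=e_7$, $[e_2,e_3]=e_5$, $[e_2,e_5]=e_6$, $[e_2,e_6]=e_7$, $[e_3,e_4]=-e_7$, $[e_3,e_5]=e_7$. Then $\mathfrak{n}$ is an Einstein nilradical.
   Context: A real nilpotent Lie algebra $\mathfrak{n}$ is called an Einstein nilradical if it admits an inner product such that the left-invariant Riemannian metric it defines on the simply connected nilpotent Lie group with Lie algebra $\mathfrak{n}$ is a nilsoliton, i.e. its Ricci operator satisfies $\mathrm{Ric}=c\,\mathrm{Id}+D$ for some $c\in\mathbb{R}$ and some derivation $D$ of $\mathfrak{n}$. Brackets of basis elements not listed are zero. *)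

theory Defs
  imports "HOL-Analysis.Analysis"
begin

definition lie_bracket :: "(real^'n \<Rightarrow> real^'n \<Rightarrow> real^'n) \<Rightarrow> bool" where
  "lie_bracket br \<longleftrightarrow> bilinear br \<and> (\<forall>x. br x x = 0) \<and>
     (\<forall>x y z. br x (br y z) + br y (br z x) + br z (br x y) = 0)"

definition nilpotent_lie :: "(real^'n \<Rightarrow> real^'n \<Rightarrow> real^'n) \<Rightarrow> bool" where
  "nilpotent_lie br \<longleftrightarrow> (\<exists>k. \<forall>xs y. length xs = k \<longrightarrow> foldr br xs y = 0)"

definition derivation :: "(real^'n \<Rightarrow> real^'n \<Rightarrow> real^'n) \<Rightarrow> (real^'n \<Rightarrow> real^'n) \<Rightarrow> bool" where
  "derivation br D \<longleftrightarrow> linear D \<and> (\<forall>x y. D (br x y) = br (D x) y + br x (D y))"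

definition inner_product :: "(real^'n \<Rightarrow> real^'n \<Rightarrow> real) \<Rightarrow> bool" where
  "inner_product g \<longleftrightarrow> bilinear g \<and> (\<forall>x y. g x y = g y x) \<and> (\<forall>x. x \<noteq> 0 \<longrightarrow> g x x > 0)"

text \<open>Levi-Civita connection on left-invariant vector fields, via the Koszul formula.\<close>
definition levi_civita ::
  "(real^'n \<Rightarrow> real^'n \<Rightarrow> real) \<Rightarrow> (real^'n \<Rightarrow> real^'n \<Rightarrow> real^'n) \<Rightarrow> real^'n \<Rightarrow> real^'n \<Rightarrow> real^'n" where
  "levi_civita g br X Y = (THE W. \<forall>Z. 2 * g W Z = g (br X Y) Z - g (br Y Z) X + g (br Z X) Y)"

definition curvature ::
  "(real^'n \<Rightarrow> real^'n \<Rightarrow> real) \<Rightarrow> (real^'n \<Rightarrow> real^'n \<Rightarrow> real^'n) \<Rightarrow> real^'n \<Rightarrow> real^'n \<Rightarrow> real^'n \<Rightarrow> real^'n" where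
  "curvature g br X Y Z =
     levi_civita g br X (levi_civita g br Y Z) - levi_civita g br Y (levi_civita g br X Z)
     - levi_civita g br (br X Y) Z"

definition ricci_tensor ::
  "(real^'n \<Rightarrow> real^'n \<Rightarrow> real) \<Rightarrow> (real^'n \<Rightarrow> real^'n \<Rightarrow> real^'n) \<Rightarrow> real^'n \<Rightarrow> real^'n \<Rightarrow> real" where
  "ricci_tensor g br Y Z = trace (matrix (\<lambda>X. curvature g br X Y Z))"

definition ricci_operator ::
  "(real^'n \<Rightarrow> real^'n \<Rightarrow> real) \<Rightarrow> (real^'n \<Rightarrow> real^'n \<Rightarrow> real^'n) \<Rightarrow> real^'n \<Rightarrow> real^'n" where
  "ricci_operator g br Y = (THE W. \<forall>Z. g W Z = ricci_tensor g br Y Z)"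

definition nilsoliton ::
  "(real^'n \<Rightarrow> real^'n \<Rightarrow> real) \<Rightarrow> (real^'n \<Rightarrow> real^'n \<Rightarrow> real^'n) \<Rightarrow> bool" where
  "nilsoliton g br \<longleftrightarrow>
     (\<exists>(c::real) D. derivation br D \<and> (\<forall>X. ricci_operator g br X = c *\<^sub>R X + D X))"

definition einstein_nilradical :: "(real^'n \<Rightarrow> real^'n \<Rightarrow> real^'n) \<Rightarrow> bool" where
  "einstein_nilradical br \<longleftrightarrow> lie_bracket br \<and> nilpotent_lie br \<and>
     (\<exists>g. inner_product g \<and> nilsoliton g br)"

text \<open>Coordinates x\$1, ..., x\$7 w.r.t. e_1..e_7 (note (7::7) = 0, which is a distinct index).\<close>
definition brk7 :: "real^7 \<Rightarrow> real^7 \<Rightarrow> real^7" where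
  "brk7 x y = vector
     [0, 0,
      x$1 * y$2 - x$2 * y$1,
      x$1 * y$3 - x$3 * y$1,
      x$2 * y$3 - x$3 * y$2,
      (x$1 * y$4 - x$4 * y$1) + (x$2 * y$5 - x$5 * y$2),
      (x$1 * y$6 - x$6 * y$1) + (x$2 * y$6 - x$6 * y$2)
        - (x$3 * y$4 - x$4 * y$3) + (x$3 * y$5 - x$5 * y$3)]"

end

theory Submission imports Defs begin

lemma exhaust_7: fixes x :: 7 shows "x = 1 \<or> x = 2 \<or> x = 3 \<or> x = 4 \<or> x = 5 \<or> x = 6 \<or> x = 7"
proof (induct x)
  case (of_int z)
  then have "z = 0 \<or> z = 1 \<or> z = 2 \<or> z = 3 \<or> z = 4 \<or> z = 5 \<or> z = 6" by fastforce
  then show ?case by auto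
qed

lemma forall_7: "(\<forall>i::7. P i) \<longleftrightarrow> P 1 \<and> P 2 \<and> P 3 \<and> P 4 \<and> P 5 \<and> P 6 \<and> P 7"
  by (metis exhaust_7)

lemma UNIV_7: "(UNIV::7 set) = {1,2,3,4,5,6,7}" using exhaust_7 by auto

lemma sum_7: "(\<Sum>i\<in>(UNIV::7 set). f i) = f 1 + f 2 + f 3 + f 4 + f 5 + f 6 + f 7"
  unfolding UNIV_7 by (simp add: ac_simps)

lemma vec7_eq: "(x::real^7) = y \<longleftrightarrow> x$1 = y$1 \<and> x$2 = y$2 \<and> x$3 = y$3 \<and> x$4 = y$4 \<and> x$5 = y$5 \<and> x$6 = y$6 \<and> x$7 = y$7"
  by (simp add: vec_eq_iff forall_7)

lemma v7: "vector [a1,a2,a3,a4,a5,a6,a7] $ (1::7) = a1"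
 "vector [a1,a2,a3,a4,a5,a6,a7] $ (2::7) = a2"
 "vector [a1,a2,a3,a4,a5,a6,a7] $ (3::7) = a3"
 "vector [a1,a2,a3,a4,a5,a6,a7] $ (4::7) = a4"
 "vector [a1,a2,a3,a4,a5,a6,a7] $ (5::7) = a5"
 "vector [a1,a2,a3,a4,a5,a6,a7] $ (6::7) = a6"
 "vector [a1,a2,a3,a4,a5,a6,a7] $ (7::7) = a7"
  by (simp_all add: vector_def)

lemma brk7_c:
  "brk7 x y $ 1 = 0"
  "brk7 x y $ 2 = 0"
  "brk7 x y $ 3 = x$1 * y$2 - x$2 * y$1"
  "brk7 x y $ 4 = x$1 * y$3 - x$3 * y$1"
  "brk7 x y $ 5 = x$2 * y$3 - x$3 * y$2"
  "brk7 x y $ 6 = (x$1 * y$4 - x$4 * y$1) + (x$2 * y$5 - x$5 * y$2)"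
  "brk7 x y $ 7 = (x$1 * y$6 - x$6 * y$1) + (x$2 * y$6 - x$6 * y$2)
        - (x$3 * y$4 - x$4 * y$3) + (x$3 * y$5 - x$5 * y$3)"
  by (simp_all add: brk7_def v7)

definition g7 :: "real^7 \<Rightarrow> real^7 \<Rightarrow> real" where
  "g7 x y = x$1*y$1 + x$2*y$2 + 1/3*(x$1*y$2+x$2*y$1) + x$3*y$3 + 45/52*(x$4*y$4 + x$5*y$5)
     - 15/52*(x$4*y$5+x$5*y$4) + 45/52*(x$6*y$6) + 2025/2704*(x$7*y$7)"

lemma brk7_lie: "lie_bracket brk7"
  unfolding lie_bracket_def bilinear_def linear_iff
  by (simp add: vec7_eq brk7_c algebra_simps)

lemma nil1: "brk7 x y $ 1 = 0 \<and> brk7 x y $ 2 = 0" by (simp add: brk7_c)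
lemma nil2: "y$1 = 0 \<Longrightarrow> y$2 = 0 \<Longrightarrow> brk7 x y $ 1 = 0 \<and> brk7 x y $ 2 = 0 \<and> brk7 x y $ 3 = 0"
  by (simp add: brk7_c)
lemma nil3: "y$1 = 0 \<Longrightarrow> y$2 = 0 \<Longrightarrow> y$3 = 0 \<Longrightarrow> brk7 x y $ 1 = 0 \<and> brk7 x y $ 2 = 0 \<and> brk7 x y $ 3 = 0
   \<and> brk7 x y $ 4 = 0 \<and> brk7 x y $ 5 = 0"
  by (simp add: brk7_c)
lemma nil4: "y$1 = 0 \<Longrightarrow> y$2 = 0 \<Longrightarrow> y$3 = 0 \<Longrightarrow> y$4 = 0 \<Longrightarrow> y$5 = 0 \<Longrightarrow>
   brk7 x y $ 1 = 0 \<and> brk7 x y $ 2 = 0 \<and> brk7 x y $ 3 = 0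
   \<and> brk7 x y $ 4 = 0 \<and> brk7 x y $ 5 = 0 \<and> brk7 x y $ 6 = 0"
  by (simp add: brk7_c)
lemma nil5: "y$1 = 0 \<Longrightarrow> y$2 = 0 \<Longrightarrow> y$3 = 0 \<Longrightarrow> y$4 = 0 \<Longrightarrow> y$5 = 0 \<Longrightarrow> y$6 = 0 \<Longrightarrow>
   brk7 x y = 0"
  by (simp add: brk7_c vec7_eq)

lemma nil_chain: "brk7 a (brk7 b (brk7 c (brk7 d (brk7 e y)))) = 0"
proof -
  define w1 where "w1 = brk7 e y"
  define w2 where "w2 = brk7 d w1"
  define w3 where "w3 = brk7 c w2"
  define w4 where "w4 = brk7 b w3"
  have h1: "w1$1 = 0" "w1$2 = 0" unfolding w1_def using nil1 by auto
  have h2: "w2$1 = 0" "w2$2 = 0" "w2$3 = 0" unfolding w2_def using nil2[OF h1] by auto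
  have h3: "w3$1 = 0" "w3$2 = 0" "w3$3 = 0" "w3$4 = 0" "w3$5 = 0"
    unfolding w3_def using nil3[OF h2] by auto
  have h4: "w4$1 = 0" "w4$2 = 0" "w4$3 = 0" "w4$4 = 0" "w4$5 = 0" "w4$6 = 0"
    unfolding w4_def using nil4[OF h3] by auto
  have "brk7 a w4 = 0" using nil5[OF h4] .
  then show ?thesis unfolding w4_def w3_def w2_def w1_def .
qed

lemma brk7_nil: "nilpotent_lie brk7"
  unfolding nilpotent_lie_def
proof (intro exI allI impI)
  fix xs :: "(real^7) list" and y :: "real^7"
  assume h: "length xs = Suc (Suc (Suc (Suc (Suc 0))))"
  then obtain a r1 where r1: "xs = a # r1" "length r1 = Suc (Suc (Suc (Suc 0)))"
    by (metis length_Suc_conv)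
  then obtain b r2 where r2: "r1 = b # r2" "length r2 = Suc (Suc (Suc 0))"
    by (metis length_Suc_conv)
  then obtain c r3 where r3: "r2 = c # r3" "length r3 = Suc (Suc 0)"
    by (metis length_Suc_conv)
  then obtain d r4 where r4: "r3 = d # r4" "length r4 = Suc 0"
    by (metis length_Suc_conv)
  then obtain e r5 where r5: "r4 = e # r5" "length r5 = 0"
    by (metis length_Suc_conv)
  then have "xs = [a,b,c,d,e]" using r1 r2 r3 r4 by simp
  then show "foldr brk7 xs y = 0" using nil_chain by simp
qed

lemma sq_id: "x1*x1 + x2*x2 + 1/3*(x1*x2+x2*x1) + x3*x3 + 45/52*(x4*x4 + x5*x5)
     - 15/52*(x4*x5+x5*x4) + 45/52*(x6*x6) + 2025/2704*(x7*(x7::real)) = (x1 + x2/3)^2 + 8/9*(x2)^2 + (x3)^2 + 45/52*(x4 - x5/3)^2 + 40/52*(x5)^2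
     + 45/52*(x6)^2 + 2025/2704*(x7)^2"
  unfolding power2_eq_square by (simp add: field_simps)

lemma sum7_zero:
  fixes a1 a2 a3 a4 a5 a6 a7 :: real
  assumes "a1^2 + 8/9*a2^2 + a3^2 + 45/52*a4^2 + 40/52*a5^2 + 45/52*a6^2 + 2025/2704*a7^2 = 0"
  shows "a1 = 0 \<and> a2 = 0 \<and> a3 = 0 \<and> a4 = 0 \<and> a5 = 0 \<and> a6 = 0 \<and> a7 = 0"
proof -
  have nn: "0 \<le> a1^2" "0 \<le> a2^2" "0 \<le> a3^2" "0 \<le> a4^2" "0 \<le> a5^2" "0 \<le> a6^2" "0 \<le> a7^2"
    by simp_all
  have "a1^2 = 0 \<and> a2^2 = 0 \<and> a3^2 = 0 \<and> a4^2 = 0 \<and> a5^2 = 0 \<and> a6^2 = 0 \<and> a7^2 = 0"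
    using assms nn by (intro conjI; linarith)
  then show ?thesis by simp
qed

lemma g7_pos: "g7 x x = 0 \<Longrightarrow> x = 0"
proof -
  assume h: "g7 x x = 0"
  have e: "g7 x x = (x$1 + x$2/3)^2 + 8/9*(x$2)^2 + (x$3)^2 + 45/52*(x$4 - x$5/3)^2 + 40/52*(x$5)^2
     + 45/52*(x$6)^2 + 2025/2704*(x$7)^2"
    unfolding g7_def by (rule sq_id)
  have z: "x$1 + x$2/3 = 0 \<and> x$2 = 0 \<and> x$3 = 0 \<and> x$4 - x$5/3 = 0 \<and> x$5 = 0 \<and> x$6 = 0 \<and> x$7 = 0"
    using sum7_zero[of "x$1 + x$2/3" "x$2" "x$3" "x$4 - x$5/3" "x$5" "x$6" "x$7"] h e by simp
  then show "x = 0" by (simp add: vec7_eq)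
qed

lemma g7_ip: "inner_product g7"
  unfolding inner_product_def bilinear_def linear_iff
proof (intro conjI allI impI)
  fix x :: "real^7" assume "x \<noteq> 0"
  have "g7 x x \<ge> 0"
  proof -
    have e: "g7 x x = (x$1 + x$2/3)^2 + 8/9*(x$2)^2 + (x$3)^2 + 45/52*(x$4 - x$5/3)^2 + 40/52*(x$5)^2
     + 45/52*(x$6)^2 + 2025/2704*(x$7)^2"
      unfolding g7_def by (rule sq_id)
    show ?thesis unfolding e by (intro add_nonneg_nonneg mult_nonneg_nonneg) auto
  qed
  then show "g7 x x > 0" using g7_pos \<open>x \<noteq> 0\<close> by force
qed (simp_all add: g7_def algebra_simps)

lemma g7_uniq: "(\<forall>Z. g7 W Z = g7 W' Z) \<Longrightarrow> W = W'"
proof -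
  assume h: "\<forall>Z. g7 W Z = g7 W' Z"
  have "g7 (W - W') (W - W') = g7 W (W - W') - g7 W' (W - W')"
    by (simp add: g7_def algebra_simps)
  then have "g7 (W - W') (W - W') = 0" using h by simp
  then show ?thesis using g7_pos by force
qed
definition LC7 :: "real^7 \<Rightarrow> real^7 \<Rightarrow> real^7" where
  "LC7 X Y = vector [
    (3/16) * X$1 * Y$3 + (9/16) * X$2 * Y$3 + (3/16) * X$3 * Y$1 + (9/16) * X$3 * Y$2 + (225/416) * X$3 * Y$4 + (-135/416) * X$3 * Y$5 + (225/416) * X$4 * Y$3 + (405/832) * X$4 * Y$6 + (-135/416) * X$5 * Y$3 + (-135/832) * X$5 * Y$6 + (405/832) * X$6 * Y$4 + (-135/832) * X$6 * Y$5 + (6075/21632) * X$6 * Y$7 + (6075/21632) * X$7 * Y$6,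
    (-9/16) * X$1 * Y$3 + (-3/16) * X$2 * Y$3 + (-9/16) * X$3 * Y$1 + (-3/16) * X$3 * Y$2 + (-135/416) * X$3 * Y$4 + (225/416) * X$3 * Y$5 + (-135/416) * X$4 * Y$3 + (-135/832) * X$4 * Y$6 + (225/416) * X$5 * Y$3 + (405/832) * X$5 * Y$6 + (-135/832) * X$6 * Y$4 + (405/832) * X$6 * Y$5 + (6075/21632) * X$6 * Y$7 + (6075/21632) * X$7 * Y$6,
    (1/2) * X$1 * Y$2 + (-45/104) * X$1 * Y$4 + (15/104) * X$1 * Y$5 + (-1/2) * X$2 * Y$1 + (15/104) * X$2 * Y$4 + (-45/104) * X$2 * Y$5 + (-45/104) * X$4 * Y$1 + (15/104) * X$4 * Y$2 + (-2025/5408) * X$4 * Y$7 + (15/104) * X$5 * Y$1 + (-45/104) * X$5 * Y$2 + (2025/5408) * X$5 * Y$7 + (-2025/5408) * X$7 * Y$4 + (2025/5408) * X$7 * Y$5,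
    (1/2) * X$1 * Y$3 + (-9/16) * X$1 * Y$6 + (-3/16) * X$2 * Y$6 + (-1/2) * X$3 * Y$1 + (135/416) * X$3 * Y$7 + (-9/16) * X$6 * Y$1 + (-3/16) * X$6 * Y$2 + (135/416) * X$7 * Y$3,
    (-3/16) * X$1 * Y$6 + (1/2) * X$2 * Y$3 + (-9/16) * X$2 * Y$6 + (-1/2) * X$3 * Y$2 + (-135/416) * X$3 * Y$7 + (-3/16) * X$6 * Y$1 + (-9/16) * X$6 * Y$2 + (-135/416) * X$7 * Y$3,
    (1/2) * X$1 * Y$4 + (-45/104) * X$1 * Y$7 + (1/2) * X$2 * Y$5 + (-45/104) * X$2 * Y$7 + (-1/2) * X$4 * Y$1 + (-1/2) * X$5 * Y$2 + (-45/104) * X$7 * Y$1 + (-45/104) * X$7 * Y$2,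
    (1/2) * X$1 * Y$6 + (1/2) * X$2 * Y$6 + (-1/2) * X$3 * Y$4 + (1/2) * X$3 * Y$5 + (1/2) * X$4 * Y$3 + (-1/2) * X$5 * Y$3 + (-1/2) * X$6 * Y$1 + (-1/2) * X$6 * Y$2]"

lemma LC7_c:
  "LC7 X Y $ 1 = (3/16) * X$1 * Y$3 + (9/16) * X$2 * Y$3 + (3/16) * X$3 * Y$1 + (9/16) * X$3 * Y$2 + (225/416) * X$3 * Y$4 + (-135/416) * X$3 * Y$5 + (225/416) * X$4 * Y$3 + (405/832) * X$4 * Y$6 + (-135/416) * X$5 * Y$3 + (-135/832) * X$5 * Y$6 + (405/832) * X$6 * Y$4 + (-135/832) * X$6 * Y$5 + (6075/21632) * X$6 * Y$7 + (6075/21632) * X$7 * Y$6"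
  "LC7 X Y $ 2 = (-9/16) * X$1 * Y$3 + (-3/16) * X$2 * Y$3 + (-9/16) * X$3 * Y$1 + (-3/16) * X$3 * Y$2 + (-135/416) * X$3 * Y$4 + (225/416) * X$3 * Y$5 + (-135/416) * X$4 * Y$3 + (-135/832) * X$4 * Y$6 + (225/416) * X$5 * Y$3 + (405/832) * X$5 * Y$6 + (-135/832) * X$6 * Y$4 + (405/832) * X$6 * Y$5 + (6075/21632) * X$6 * Y$7 + (6075/21632) * X$7 * Y$6"
  "LC7 X Y $ 3 = (1/2) * X$1 * Y$2 + (-45/104) * X$1 * Y$4 + (15/104) * X$1 * Y$5 + (-1/2) * X$2 * Y$1 + (15/104) * X$2 * Y$4 + (-45/104) * X$2 * Y$5 + (-45/104) * X$4 * Y$1 + (15/104) * X$4 * Y$2 + (-2025/5408) * X$4 * Y$7 + (15/104) * X$5 * Y$1 + (-45/104) * X$5 * Y$2 + (2025/5408) * X$5 * Y$7 + (-2025/5408) * X$7 * Y$4 + (2025/5408) * X$7 * Y$5"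
  "LC7 X Y $ 4 = (1/2) * X$1 * Y$3 + (-9/16) * X$1 * Y$6 + (-3/16) * X$2 * Y$6 + (-1/2) * X$3 * Y$1 + (135/416) * X$3 * Y$7 + (-9/16) * X$6 * Y$1 + (-3/16) * X$6 * Y$2 + (135/416) * X$7 * Y$3"
  "LC7 X Y $ 5 = (-3/16) * X$1 * Y$6 + (1/2) * X$2 * Y$3 + (-9/16) * X$2 * Y$6 + (-1/2) * X$3 * Y$2 + (-135/416) * X$3 * Y$7 + (-3/16) * X$6 * Y$1 + (-9/16) * X$6 * Y$2 + (-135/416) * X$7 * Y$3"
  "LC7 X Y $ 6 = (1/2) * X$1 * Y$4 + (-45/104) * X$1 * Y$7 + (1/2) * X$2 * Y$5 + (-45/104) * X$2 * Y$7 + (-1/2) * X$4 * Y$1 + (-1/2) * X$5 * Y$2 + (-45/104) * X$7 * Y$1 + (-45/104) * X$7 * Y$2"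
  "LC7 X Y $ 7 = (1/2) * X$1 * Y$6 + (1/2) * X$2 * Y$6 + (-1/2) * X$3 * Y$4 + (1/2) * X$3 * Y$5 + (1/2) * X$4 * Y$3 + (-1/2) * X$5 * Y$3 + (-1/2) * X$6 * Y$1 + (-1/2) * X$6 * Y$2"
  by (simp_all add: LC7_def v7)

lemma LC7_eq: "levi_civita g7 brk7 X Y = LC7 X Y"
  unfolding levi_civita_def
proof (rule the_equality)
  show A: "\<forall>Z. 2 * g7 (LC7 X Y) Z = g7 (brk7 X Y) Z - g7 (brk7 Y Z) X + g7 (brk7 Z X) Y"
    by (simp add: g7_def LC7_c brk7_c algebra_simps)
  fix W assume h: "\<forall>Z. 2 * g7 W Z = g7 (brk7 X Y) Z - g7 (brk7 Y Z) X + g7 (brk7 Z X) Y"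
  have "\<forall>Z. g7 W Z = g7 (LC7 X Y) Z" using h A by (metis mult_cancel_left zero_neq_numeral)
  then show "W = LC7 X Y" by (rule g7_uniq)
qed

lemma ax7: "axis (k::7) (1::real) $ j = (if j = k then 1 else 0)"
  by (simp add: axis_def)

definition D7 :: "real^7 \<Rightarrow> real^7" where
  "D7 x = (171/208) *\<^sub>R vector [x$1, x$2, 2*x$3, 3*x$4, 3*x$5, 4*x$6, 5*x$7]"

lemma D7_c:
  "D7 x $ 1 = 171/208 * x$1" "D7 x $ 2 = 171/208 * x$2" "D7 x $ 3 = 171/208 * (2 * x$3)"
  "D7 x $ 4 = 171/208 * (3 * x$4)" "D7 x $ 5 = 171/208 * (3 * x$5)" "D7 x $ 6 = 171/208 * (4 * x$6)"
  "D7 x $ 7 = 171/208 * (5 * x$7)"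
  by (simp_all add: D7_def v7)

lemma D7_der: "derivation brk7 D7"
  unfolding derivation_def linear_iff
  by (simp add: vec7_eq D7_c brk7_c algebra_simps)

lemma LCax1: "LC7 (axis 1 1) Z = vector [(3/16) * Z$3, (-9/16) * Z$3, (1/2) * Z$2 + (-45/104) * Z$4 + (15/104) * Z$5, (1/2) * Z$3 + (-9/16) * Z$6, (-3/16) * Z$6, (1/2) * Z$4 + (-45/104) * Z$7, (1/2) * Z$6]"
  by (simp add: vec7_eq LC7_c ax7 v7)

lemma LCax2: "LC7 (axis 2 1) Z = vector [(9/16) * Z$3, (-3/16) * Z$3, (-1/2) * Z$1 + (15/104) * Z$4 + (-45/104) * Z$5, (-3/16) * Z$6, (1/2) * Z$3 + (-9/16) * Z$6, (1/2) * Z$5 + (-45/104) * Z$7, (1/2) * Z$6]"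
  by (simp add: vec7_eq LC7_c ax7 v7)

lemma LCax3: "LC7 (axis 3 1) Z = vector [(3/16) * Z$1 + (9/16) * Z$2 + (225/416) * Z$4 + (-135/416) * Z$5, (-9/16) * Z$1 + (-3/16) * Z$2 + (-135/416) * Z$4 + (225/416) * Z$5, 0, (-1/2) * Z$1 + (135/416) * Z$7, (-1/2) * Z$2 + (-135/416) * Z$7, 0, (-1/2) * Z$4 + (1/2) * Z$5]"
  by (simp add: vec7_eq LC7_c ax7 v7)

lemma LCax4: "LC7 (axis 4 1) Z = vector [(225/416) * Z$3 + (405/832) * Z$6, (-135/416) * Z$3 + (-135/832) * Z$6, (-45/104) * Z$1 + (15/104) * Z$2 + (-2025/5408) * Z$7, 0, 0, (-1/2) * Z$1, (1/2) * Z$3]"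
  by (simp add: vec7_eq LC7_c ax7 v7)

lemma LCax5: "LC7 (axis 5 1) Z = vector [(-135/416) * Z$3 + (-135/832) * Z$6, (225/416) * Z$3 + (405/832) * Z$6, (15/104) * Z$1 + (-45/104) * Z$2 + (2025/5408) * Z$7, 0, 0, (-1/2) * Z$2, (-1/2) * Z$3]"
  by (simp add: vec7_eq LC7_c ax7 v7)

lemma LCax6: "LC7 (axis 6 1) Z = vector [(405/832) * Z$4 + (-135/832) * Z$5 + (6075/21632) * Z$7, (-135/832) * Z$4 + (405/832) * Z$5 + (6075/21632) * Z$7, 0, (-9/16) * Z$1 + (-3/16) * Z$2, (-3/16) * Z$1 + (-9/16) * Z$2, 0, (-1/2) * Z$1 + (-1/2) * Z$2]"
  by (simp add: vec7_eq LC7_c ax7 v7)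

lemma LCax7: "LC7 (axis 7 1) Z = vector [(6075/21632) * Z$6, (6075/21632) * Z$6, (-2025/5408) * Z$4 + (2025/5408) * Z$5, (135/416) * Z$3, (-135/416) * Z$3, (-45/104) * Z$1 + (-45/104) * Z$2, 0]"
  by (simp add: vec7_eq LC7_c ax7 v7)

lemma cK1: "curvature g7 brk7 (axis 1 1) Y Z $ 1 = (-9/32) * Y$2 * Z$1 + (-27/32) * Y$2 * Z$2 + (-225/832) * Y$2 * Z$4 + (135/832) * Y$2 * Z$5 + (-441/832) * Y$3 * Z$3 + (-405/1664) * Y$3 * Z$6 + (-135/1664) * Y$4 * Z$1 + (-405/1664) * Y$4 * Z$2 + (-21465/43264) * Y$4 * Z$4 + (3645/43264) * Y$4 * Z$5 + (-6075/43264) * Y$4 * Z$7 + (45/1664) * Y$5 * Z$1 + (135/1664) * Y$5 * Z$2 + (-2565/43264) * Y$5 * Z$4 + (2025/43264) * Y$5 * Z$5 + (-405/1664) * Y$6 * Z$3 + (-7695/43264) * Y$6 * Z$6 + (-18225/86528) * Y$7 * Z$4 + (6075/86528) * Y$7 * Z$5 + (273375/2249728) * Y$7 * Z$7"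
  unfolding curvature_def LC7_eq LCax1
  by (simp add: LC7_c brk7_c ax7 v7 algebra_simps; (simp add: field_simps)?)

lemma cK2: "curvature g7 brk7 (axis 2 1) Y Z $ 2 = (-27/32) * Y$1 * Z$1 + (-9/32) * Y$1 * Z$2 + (-135/832) * Y$1 * Z$4 + (225/832) * Y$1 * Z$5 + (-441/832) * Y$3 * Z$3 + (-405/1664) * Y$3 * Z$6 + (-135/1664) * Y$4 * Z$1 + (-45/1664) * Y$4 * Z$2 + (2025/43264) * Y$4 * Z$4 + (-2565/43264) * Y$4 * Z$5 + (405/1664) * Y$5 * Z$1 + (135/1664) * Y$5 * Z$2 + (3645/43264) * Y$5 * Z$4 + (-21465/43264) * Y$5 * Z$5 + (-6075/43264) * Y$5 * Z$7 + (-405/1664) * Y$6 * Z$3 + (-7695/43264) * Y$6 * Z$6 + (6075/86528) * Y$7 * Z$4 + (-18225/86528) * Y$7 * Z$5 + (273375/2249728) * Y$7 * Z$7"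
  unfolding curvature_def LC7_eq LCax2
  by (simp add: LC7_c brk7_c ax7 v7 algebra_simps; (simp add: field_simps)?)

lemma cK3: "curvature g7 brk7 (axis 3 1) Y Z $ 3 = (-153/416) * Y$1 * Z$1 + (129/416) * Y$1 * Z$2 + (135/832) * Y$1 * Z$4 + (-225/832) * Y$1 * Z$5 + (-2025/10816) * Y$1 * Z$7 + (129/416) * Y$2 * Z$1 + (-153/416) * Y$2 * Z$2 + (225/832) * Y$2 * Z$4 + (-135/832) * Y$2 * Z$5 + (2025/10816) * Y$2 * Z$7 + (135/832) * Y$4 * Z$1 + (225/832) * Y$4 * Z$2 + (-6075/21632) * Y$4 * Z$4 + (7425/21632) * Y$4 * Z$5 + (-225/832) * Y$5 * Z$1 + (-135/832) * Y$5 * Z$2 + (7425/21632) * Y$5 * Z$4 + (-6075/21632) * Y$5 * Z$5 + (-2025/10816) * Y$7 * Z$1 + (2025/10816) * Y$7 * Z$2 + (273375/1124864) * Y$7 * Z$7"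
  unfolding curvature_def LC7_eq LCax3
  by (simp add: LC7_c brk7_c ax7 v7 algebra_simps; (simp add: field_simps)?)

lemma cK4: "curvature g7 brk7 (axis 4 1) Y Z $ 4 = (-261/416) * Y$1 * Z$1 + (-27/104) * Y$1 * Z$2 + (2025/10816) * Y$1 * Z$7 + (-3/32) * Y$2 * Z$1 + (-45/208) * Y$3 * Z$3 + (405/1664) * Y$3 * Z$6 + (405/1664) * Y$6 * Z$3 + (405/1664) * Y$6 * Z$6 + (6075/43264) * Y$7 * Z$1 + (-2025/43264) * Y$7 * Z$2 + (273375/2249728) * Y$7 * Z$7"
  unfolding curvature_def LC7_eq LCax4
  by (simp add: LC7_c brk7_c ax7 v7 algebra_simps; (simp add: field_simps)?)

lemma cK5: "curvature g7 brk7 (axis 5 1) Y Z $ 5 = (-3/32) * Y$1 * Z$2 + (-27/104) * Y$2 * Z$1 + (-261/416) * Y$2 * Z$2 + (-2025/10816) * Y$2 * Z$7 + (-45/208) * Y$3 * Z$3 + (405/1664) * Y$3 * Z$6 + (405/1664) * Y$6 * Z$3 + (405/1664) * Y$6 * Z$6 + (2025/43264) * Y$7 * Z$1 + (-6075/43264) * Y$7 * Z$2 + (273375/2249728) * Y$7 * Z$7"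
  unfolding curvature_def LC7_eq LCax5
  by (simp add: LC7_c brk7_c ax7 v7 algebra_simps; (simp add: field_simps)?)

lemma cK6: "curvature g7 brk7 (axis 6 1) Y Z $ 6 = (-153/416) * Y$1 * Z$1 + (-231/416) * Y$1 * Z$2 + (-231/416) * Y$2 * Z$1 + (-153/416) * Y$2 * Z$2 + (405/1664) * Y$4 * Z$4 + (-135/1664) * Y$4 * Z$5 + (6075/43264) * Y$4 * Z$7 + (-135/1664) * Y$5 * Z$4 + (405/1664) * Y$5 * Z$5 + (6075/43264) * Y$5 * Z$7 + (6075/43264) * Y$7 * Z$4 + (6075/43264) * Y$7 * Z$5 + (273375/1124864) * Y$7 * Z$7"
  unfolding curvature_def LC7_eq LCax6
  by (simp add: LC7_c brk7_c ax7 v7 algebra_simps; (simp add: field_simps)?)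

lemma cK7: "curvature g7 brk7 (axis 7 1) Y Z $ 7 = (45/208) * Y$1 * Z$1 + (45/208) * Y$1 * Z$2 + (45/208) * Y$2 * Z$1 + (45/208) * Y$2 * Z$2 + (135/416) * Y$3 * Z$3 + (2025/10816) * Y$4 * Z$4 + (-2025/10816) * Y$4 * Z$5 + (-2025/10816) * Y$5 * Z$4 + (2025/10816) * Y$5 * Z$5 + (6075/21632) * Y$6 * Z$6"
  unfolding curvature_def LC7_eq LCax7
  by (simp add: LC7_c brk7_c ax7 v7 algebra_simps; (simp add: field_simps)?)


lemma ric_eq: "ricci_tensor g7 brk7 Y Z = g7 ((-45/16) *\<^sub>R Y + D7 Y) Z"
  unfolding ricci_tensor_def trace_def matrix_def sum_7
  by (simp add: cK1 cK2 cK3 cK4 cK5 cK6 cK7 g7_def D7_c algebra_simps; (simp add: field_simps)?)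

theorem mainTheorem13:
  shows "einstein_nilradical brk7"
  unfolding einstein_nilradical_def
proof (intro conjI brk7_lie brk7_nil exI[of _ g7] g7_ip)
  show "nilsoliton g7 brk7"
    unfolding nilsoliton_def
  proof (intro exI[of _ "-45/16"] exI[of _ D7] conjI D7_der allI)
    fix X
    show "ricci_operator g7 brk7 X = (-45/16) *\<^sub>R X + D7 X"
      unfolding ricci_operator_def
    proof (rule the_equality)
      show "\<forall>Z. g7 ((-45/16) *\<^sub>R X + D7 X) Z = ricci_tensor g7 brk7 X Z" by (simp add: ric_eq)
      fix W assume "\<forall>Z. g7 W Z = ricci_tensor g7 brk7 X Z"
      then show "W = (-45/16) *\<^sub>R X + D7 X" by (intro g7_uniq) (simp add: ric_eq)
    qed
  qed
qed

end
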